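(* Let $d\ge3$, $h\ge1$, and for $1\le n\le h$ let $\mathbf{y}_n := \sum_{i\in S_n}\mathbf{x}_i$, where $S_n$ is the set of vertices at distance $n$ from the root. Then the order of $\bar{\mathbf{y}}_n$ in $G(d,h)$ is $(d-1)^{h+1-n}$.
   Context: Let $\mathcal{T}(d,h)$ be the rooted tree in which the root $0$ has $d$ children, every vertex at distance $1,\dots,h-1$ from the root has $d-1$ children, and the vertices at distance $h$ are leaves. Let $V$ be its vertex set, $A$ its adjacency matrix, $\Delta := dI-A$, and $\Lambda\subset\mathbb{Z}^V$ the lattice spanned by the rows of $\Delta$. Then $G(d,h):=\mathbb{Z}^V/\Lambda$; $\{\mathbf{x}_i:i\in V\}$ is the standard basis of $\mathbb{Z}^V$ and $\bar{\mathbf{v}}$ denotes the image of $\mathbf{v}\in\mathbb{Z}^V$ in $G(d,h)$. *)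

theory Defs
  imports Main
begin

text \<open>Vertices of T(d,h) are encoded as paths from the root: the root is [],
  the children of xs are xs @ [j] with j < d if xs = [] and j < d - 1 otherwise.
  The distance of a vertex from the root is the length of its path.\<close>

definition tree_vertices :: "nat \<Rightarrow> nat \<Rightarrow> nat list set" where
  "tree_vertices d h =
     {xs. length xs \<le> h \<and> (\<forall>k<length xs. xs ! k < (if k = 0 then d else d - 1))}"

definition tree_adj :: "nat \<Rightarrow> nat \<Rightarrow> nat list \<Rightarrow> nat list \<Rightarrow> int" where
  "tree_adj d h u v =
     (if u \<in> tree_vertices d h \<and> v \<in> tree_vertices d h \<and>
         ((\<exists>j. v = u @ [j]) \<or> (\<exists>j. u = v @ [j])) then 1 else 0)"

definition tree_Delta :: "nat \<Rightarrow> nat \<Rightarrow> nat list \<Rightarrow> nat list \<Rightarrow> int" where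
  "tree_Delta d h u v = (if u = v then int d else 0) - tree_adj d h u v"

text \<open>Membership in the lattice Lambda spanned over Z by the rows of Delta
  (vectors in Z^V are functions on V; values outside V are ignored).\<close>
definition in_tree_lattice :: "nat \<Rightarrow> nat \<Rightarrow> (nat list \<Rightarrow> int) \<Rightarrow> bool" where
  "in_tree_lattice d h v \<longleftrightarrow>
     (\<exists>c :: nat list \<Rightarrow> int. \<forall>w\<in>tree_vertices d h.
        v w = (\<Sum>u\<in>tree_vertices d h. c u * tree_Delta d h u w))"

text \<open>Order of the class of v in G(d,h) = Z^V / Lambda
  (0 if the class has infinite order, as for HOL-Algebra's ord).\<close>
definition tree_group_order :: "nat \<Rightarrow> nat \<Rightarrow> (nat list \<Rightarrow> int) \<Rightarrow> nat" where
  "tree_group_order d h v =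
     (if \<exists>k>0. in_tree_lattice d h (\<lambda>w. int k * v w)
      then LEAST k. k > 0 \<and> in_tree_lattice d h (\<lambda>w. int k * v w)
      else 0)"

definition level_vector :: "nat \<Rightarrow> nat \<Rightarrow> nat \<Rightarrow> nat list \<Rightarrow> int" where
  "level_vector d h n w = (if w \<in> tree_vertices d h \<and> length w = n then 1 else 0)"

end

theory Submission
  imports Defs
begin

definition nch :: "nat \<Rightarrow> nat list \<Rightarrow> nat" where
  "nch d w = (if w = [] then d else d - 1)"

lemma finite_V: "finite (tree_vertices d h)"
proof -
  have "tree_vertices d h \<subseteq> {xs. set xs \<subseteq> {..<d} \<and> length xs \<le> h}"
  proof (rule subsetI, rule CollectI, rule conjI)
    fix x assume x: "x \<in> tree_vertices d h"
    then show "length x \<le> h" by (simp add: tree_vertices_def)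
    show "set x \<subseteq> {..<d}"
    proof
      fix a assume "a \<in> set x"
      then obtain i where i: "i < length x" "a = x ! i" by (auto simp: in_set_conv_nth)
      then have "x ! i < (if i = 0 then d else d - 1)" using x by (simp add: tree_vertices_def)
      then show "a \<in> {..<d}" using i by (auto split: if_splits)
    qed
  qed
  then show ?thesis using finite_lists_length_le[of "{..<d}" h] finite_subset by blast
qed

lemma nil_V: "[] \<in> tree_vertices d h"
  by (simp add: tree_vertices_def)

lemma child_V:
  assumes "w \<in> tree_vertices d h" "length w < h" "j < nch d w"
  shows "w @ [j] \<in> tree_vertices d h"
  using assms unfolding tree_vertices_def nch_def
  by (auto simp: nth_append split: if_splits)

lemma butlast_V:
  assumes "w \<in> tree_vertices d h"
  shows "butlast w \<in> tree_vertices d h"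
  using assms unfolding tree_vertices_def
  by (auto simp: nth_butlast)

lemma child_V_rev:
  assumes "w @ [j] \<in> tree_vertices d h"
  shows "w \<in> tree_vertices d h \<and> length w < h \<and> j < nch d w"
proof -
  have "butlast (w @ [j]) \<in> tree_vertices d h" using butlast_V[OF assms] .
  moreover have "length w < h \<and> j < nch d w"
  proof -
    have l: "length (w @ [j]) \<le> h" and
      a: "(w @ [j]) ! length w < (if length w = 0 then d else d - 1)"
      using assms unfolding tree_vertices_def by auto
    from l have "length w < h" by simp
    moreover from a have "j < nch d w" by (simp add: nch_def)
    ultimately show ?thesis by simp
  qed
  ultimately show ?thesis by simp
qed

lemma adj_sym: "tree_adj d h u w = tree_adj d h w u"
  unfolding tree_adj_def by auto

lemma Delta_sym: "tree_Delta d h u w = tree_Delta d h w u"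
  unfolding tree_Delta_def using adj_sym by auto

lemma adj_sum:
  fixes c :: "nat list \<Rightarrow> int"
  assumes w: "w \<in> tree_vertices d h"
  shows "(\<Sum>u\<in>tree_vertices d h. c u * tree_adj d h u w) =
    (if w = [] then 0 else c (butlast w)) +
    (if length w < h then (\<Sum>j<nch d w. c (w @ [j])) else 0)"
proof -
  let ?V = "tree_vertices d h"
  let ?P = "if w = [] then {} else {butlast w}"
  let ?C = "(\<lambda>j. w @ [j]) ` {..<(if length w < h then nch d w else 0)}"
  have "(\<Sum>u\<in>?V. c u * tree_adj d h u w) =
        (\<Sum>u\<in>?V. if (\<exists>j. w = u @ [j]) \<or> (\<exists>j. u = w @ [j]) then c u else 0)"
    by (rule sum.cong) (auto simp: tree_adj_def w)
  also have "\<dots> = (\<Sum>u\<in>{u\<in>?V. (\<exists>j. w = u @ [j]) \<or> (\<exists>j. u = w @ [j])}. c u)"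
    by (simp add: sum.inter_filter finite_V)
  also have "{u\<in>?V. (\<exists>j. w = u @ [j]) \<or> (\<exists>j. u = w @ [j])} = ?P \<union> ?C"
  proof (intro equalityI subsetI)
    fix u assume u: "u \<in> {u\<in>?V. (\<exists>j. w = u @ [j]) \<or> (\<exists>j. u = w @ [j])}"
    then have uV: "u \<in> ?V" and "(\<exists>j. w = u @ [j]) \<or> (\<exists>j. u = w @ [j])" by auto
    from this(2) show "u \<in> ?P \<union> ?C"
    proof
      assume "\<exists>j. w = u @ [j]"
      then obtain j where "w = u @ [j]" by blast
      then have "w \<noteq> []" "u = butlast w" by auto
      then show ?thesis by simp
    next
      assume "\<exists>j. u = w @ [j]"
      then obtain j where j: "u = w @ [j]" by blast
      then have "length w < h \<and> j < nch d w" using child_V_rev[of w j d h] uV by simp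
      then have "u \<in> ?C" using j by auto
      then show ?thesis by blast
    qed
  next
    fix u assume "u \<in> ?P \<union> ?C"
    then show "u \<in> {u\<in>?V. (\<exists>j. w = u @ [j]) \<or> (\<exists>j. u = w @ [j])}"
    proof
      assume "u \<in> ?P"
      then have ne: "w \<noteq> []" and ub: "u = butlast w" by (cases "w = []", simp_all)+
      have "w = u @ [last w]" using ne ub by simp
      then show ?thesis using butlast_V[OF w] ub by blast
    next
      assume "u \<in> ?C"
      then show ?thesis using child_V[OF w] by (auto split: if_splits)
    qed
  qed
  also have "(\<Sum>u\<in>?P \<union> ?C. c u) = (\<Sum>u\<in>?P. c u) + (\<Sum>u\<in>?C. c u)"
    by (rule sum.union_disjoint) (auto dest: arg_cong[of _ _ length])
  also have "(\<Sum>u\<in>?C. c u) = (\<Sum>j<(if length w < h then nch d w else 0). c (w @ [j]))"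
    by (subst sum.reindex) (auto simp: inj_on_def)
  also have "(\<Sum>u\<in>?P. c u) = (if w = [] then 0 else c (butlast w))" by simp
  also have "(\<Sum>j<(if length w < h then nch d w else 0). c (w @ [j])) =
     (if length w < h then (\<Sum>j<nch d w. c (w @ [j])) else 0)" by simp
  finally show ?thesis .
qed

lemma rad_sum:
  fixes f :: "nat \<Rightarrow> int"
  assumes w: "w \<in> tree_vertices d h"
  shows "(\<Sum>u\<in>tree_vertices d h. f (length u) * tree_Delta d h u w) =
    int d * f (length w) - (if w = [] then 0 else f (length w - 1))
     - (if length w < h then int (nch d w) * f (length w + 1) else 0)"
proof -
  let ?V = "tree_vertices d h"
  have "(\<Sum>u\<in>?V. f (length u) * tree_Delta d h u w) =
     (\<Sum>u\<in>?V. (if u = w then int d * f (length u) else 0)) -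
     (\<Sum>u\<in>?V. f (length u) * tree_adj d h u w)"
    unfolding tree_Delta_def sum_subtractf[symmetric]
    by (rule sum.cong) (auto simp: algebra_simps)
  also have "(\<Sum>u\<in>?V. (if u = w then int d * f (length u) else 0)) = int d * f (length w)"
    using w finite_V by (simp add: sum.delta')
  also have "(\<Sum>u\<in>?V. f (length u) * tree_adj d h u w) =
     (if w = [] then 0 else f (length w - 1)) +
     (if length w < h then int (nch d w) * f (length w + 1) else 0)"
    by (subst adj_sum[OF w]) (auto simp: length_butlast)
  finally show ?thesis by simp
qed


lemma level_eq:
  assumes "1 \<le> n" "n \<le> h"
  shows "{w \<in> tree_vertices d h. length w = n} =
    (\<lambda>(j, ys). j # ys) ` ({..<d} \<times> {ys. set ys \<subseteq> {..<d-1} \<and> length ys = n - 1})"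
proof (intro equalityI subsetI)
  fix w assume w: "w \<in> {w \<in> tree_vertices d h. length w = n}"
  then have wV: "w \<in> tree_vertices d h" and lw: "length w = n" by auto
  then obtain a ys where ays: "w = a # ys" using assms by (cases w) auto
  have a: "a < d" using wV ays unfolding tree_vertices_def by auto
  have "set ys \<subseteq> {..<d-1}"
  proof
    fix b assume "b \<in> set ys"
    then obtain i where i: "i < length ys" "b = ys ! i" by (auto simp: in_set_conv_nth)
    then have "Suc i < length w" using ays by simp
    then have "w ! Suc i < d - 1" using wV unfolding tree_vertices_def by auto
    then show "b \<in> {..<d-1}" using i ays by simp
  qed
  moreover have "length ys = n - 1" using lw ays by simp
  ultimately show "w \<in> (\<lambda>(j, ys). j # ys) ` ({..<d} \<times> {ys. set ys \<subseteq> {..<d-1} \<and> length ys = n - 1})"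
    using a ays by blast
next
  fix w assume "w \<in> (\<lambda>(j, ys). j # ys) ` ({..<d} \<times> {ys. set ys \<subseteq> {..<d-1} \<and> length ys = n - 1})"
  then obtain j ys where w: "w = j # ys" and j: "j < d" and ys: "set ys \<subseteq> {..<d-1}"
    and l: "length ys = n - 1" by auto
  have "\<forall>k<length w. w ! k < (if k = 0 then d else d - 1)"
  proof (intro allI impI)
    fix k assume "k < length w"
    then show "w ! k < (if k = 0 then d else d - 1)"
    proof (cases k)
      case 0 then show ?thesis using w j by simp
    next
      case (Suc i)
      then have "i < length ys" using \<open>k < length w\<close> w by simp
      then have "ys ! i \<in> set ys" by simp
      then show ?thesis using ys Suc w by auto
    qed
  qed
  moreover have "length w = n" using w l assms by simp
  ultimately show "w \<in> {w \<in> tree_vertices d h. length w = n}"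
    using assms unfolding tree_vertices_def by simp
qed

lemma card_level:
  assumes "1 \<le> n" "n \<le> h"
  shows "card {w \<in> tree_vertices d h. length w = n} = d * (d - 1) ^ (n - 1)"
proof -
  have "card ((\<lambda>(j, ys). j # ys) ` ({..<d} \<times> {ys. set ys \<subseteq> {..<d-1} \<and> length ys = n - 1}))
     = card ({..<d} \<times> {ys. set ys \<subseteq> {..<d-1} \<and> length ys = n - 1})"
    by (rule card_image) (auto simp: inj_on_def)
  also have "\<dots> = d * (d - 1) ^ (n - 1)"
    by (simp add: card_cartesian_product card_lists_length_eq)
  finally show ?thesis using level_eq[OF assms] by simp
qed


lemma coprime_1_plus:
  fixes q X :: int
  shows "coprime q (1 + q * X)"
proof (rule coprimeI)
  fix p assume "p dvd q" "p dvd 1 + q * X"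
  moreover from \<open>p dvd q\<close> have "p dvd q * X" by simp
  ultimately have "p dvd (1 + q * X) - q * X" using dvd_diff by blast
  then show "is_unit p" by simp
qed

lemma lower_bound:
  assumes d3: "d \<ge> 3" and n1: "1 \<le> n" and nh: "n \<le> h"
    and lat: "in_tree_lattice d h (\<lambda>w. int k * level_vector d h n w)"
  shows "(d - 1) ^ (h + 1 - n) dvd k"
proof -
  let ?V = "tree_vertices d h"
  define q :: int where "q = int d - 1"
  have dq: "int d = q + 1" by (simp add: q_def)
  define z :: "nat \<Rightarrow> int" where "z m = 1 - q ^ (h + 1 - m)" for m
  obtain c where c: "\<forall>w\<in>?V. int k * level_vector d h n w =
        (\<Sum>u\<in>?V. c u * tree_Delta d h u w)"
    using lat unfolding in_tree_lattice_def by blast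
  have Dz: "(\<Sum>w\<in>?V. z (length w) * tree_Delta d h u w) =
      (if u = [] then int d * (z 0 - z 1) else 0)" if uV: "u \<in> ?V" for u
  proof -
    have r: "(\<Sum>w\<in>?V. z (length w) * tree_Delta d h u w) =
       (\<Sum>w\<in>?V. z (length w) * tree_Delta d h w u)"
      by (rule sum.cong[OF refl], subst Delta_sym, rule refl)
    have lu: "length u \<le> h" using uV by (simp add: tree_vertices_def)
    show ?thesis
    proof (cases "u = []")
      case True
      then show ?thesis using r rad_sum[OF uV, of z] nh n1 by (simp add: nch_def algebra_simps)
    next
      case False
      then have m1: "length u \<ge> 1" by (cases u) auto
      show ?thesis
      proof (cases "length u < h")
        case True
        define t where "t = h - 1 - length u"
        have t: "h + 1 - length u = Suc (Suc t)" using True unfolding t_def by linarith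
        have t1: "h + 1 - (length u - 1) = Suc (Suc (Suc t))" using t m1 by linarith
        have t2: "h + 1 - (length u + 1) = Suc t" using t by linarith
        have "int (d - 1) = q" using d3 by (simp add: q_def)
        then have nc: "int (nch d u) = q" using False by (simp add: nch_def)
        have "(q + 1) * (1 - q ^ Suc (Suc t)) - (1 - q ^ Suc (Suc (Suc t))) - q * (1 - q ^ Suc t) = 0"
          by (simp add: algebra_simps)
        then have "int d * z (length u) - z (length u - 1) - int (nch d u) * z (length u + 1) = 0"
          unfolding z_def t t1 t2 nc dq .
        then show ?thesis using r rad_sum[OF uV, of z] False True by simp
      next
        case False2: False
        then have lh: "length u = h" using lu by simp
        have t1: "h + 1 - (length u - 1) = 2" using lh m1 by linarith
        have t0: "h + 1 - length u = 1" using lh by simp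
        have "int d * z (length u) - z (length u - 1) = 0"
          unfolding z_def t0 t1 by (simp add: dq algebra_simps power2_eq_square)
        then show ?thesis using r rad_sum[OF uV, of z] False False2 by simp
      qed
    qed
  qed
  have "(\<Sum>w\<in>?V. z (length w) * (int k * level_vector d h n w)) =
        (\<Sum>w\<in>?V. z (length w) * (\<Sum>u\<in>?V. c u * tree_Delta d h u w))"
    using c by (intro sum.cong) auto
  also have "\<dots> = (\<Sum>w\<in>?V. \<Sum>u\<in>?V. z (length w) * (c u * tree_Delta d h u w))"
    by (simp only: sum_distrib_left)
  also have "\<dots> = (\<Sum>u\<in>?V. \<Sum>w\<in>?V. z (length w) * (c u * tree_Delta d h u w))"
    by (rule sum.swap)
  also have "\<dots> = (\<Sum>u\<in>?V. \<Sum>w\<in>?V. c u * (z (length w) * tree_Delta d h u w))"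
    by (simp only: mult.left_commute)
  also have "\<dots> = (\<Sum>u\<in>?V. c u * (\<Sum>w\<in>?V. z (length w) * tree_Delta d h u w))"
    by (simp only: sum_distrib_left)
  also have "\<dots> = (\<Sum>u\<in>?V. if u = [] then c u * (int d * (z 0 - z 1)) else 0)"
    using Dz by (intro sum.cong) auto
  also have "\<dots> = c [] * (int d * (z 0 - z 1))"
    using finite_V nil_V by (simp add: sum.delta')
  finally have eq1: "(\<Sum>w\<in>?V. z (length w) * (int k * level_vector d h n w)) =
     c [] * (int d * (z 0 - z 1))" .
  have "(\<Sum>w\<in>?V. z (length w) * (int k * level_vector d h n w)) =
        (\<Sum>w\<in>?V. if length w = n then z n * int k else 0)"
    by (intro sum.cong) (auto simp: level_vector_def)
  also have "\<dots> = (\<Sum>w\<in>{w\<in>?V. length w = n}. z n * int k)"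
    using sum.inter_filter[OF finite_V[of d h], where g="\<lambda>w. z n * int k" and P="\<lambda>w. length w = n"] by simp
  also have "\<dots> = int (d * (d - 1) ^ (n - 1)) * (z n * int k)"
    using card_level[OF n1 nh] by simp
  finally have eq3: "(\<Sum>w\<in>?V. z (length w) * (int k * level_vector d h n w)) =
     int (d * (d - 1) ^ (n - 1)) * (z n * int k)" .
  have eq2: "int (d * (d - 1) ^ (n - 1)) * (z n * int k) = c [] * (int d * (z 0 - z 1))"
    using trans[OF sym[OF eq3] eq1] .
  define e where "e = h + 1 - n"
  have e1: "e \<ge> 1" using nh by (simp add: e_def)
  have qd1: "int (d - 1) = q" using d3 by (simp add: q_def)
  have lhs: "int (d * (d - 1) ^ (n - 1)) = (q + 1) * q ^ (n - 1)"
    using qd1 dq by simp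
  have z01: "z 0 - z 1 = q ^ (n - 1) * q ^ e * (1 - q)"
  proof -
    have a: "h + 1 - 0 = Suc ((n - 1) + e)" "h + 1 - 1 = (n - 1) + e"
      using n1 nh by (simp_all add: e_def)
    have "(1 - q ^ Suc ((n - 1) + e)) - (1 - q ^ ((n - 1) + e)) = q ^ (n - 1) * q ^ e * (1 - q)"
      by (simp add: power_add algebra_simps)
    then show ?thesis unfolding z_def a .
  qed
  have dv0: "q ^ (n - 1) * q ^ e dvd q ^ (n - 1) * ((q + 1) * (z n * int k))"
  proof -
    have "q ^ (n - 1) * q ^ e dvd c [] * (int d * (z 0 - z 1))"
      unfolding z01 by (simp add: mult.assoc)
    also have "c [] * (int d * (z 0 - z 1)) = (q + 1) * q ^ (n - 1) * (z n * int k)"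
      using eq2 unfolding lhs by (rule sym)
    also have "\<dots> = q ^ (n - 1) * ((q + 1) * (z n * int k))"
      by (simp only: ac_simps)
    finally show ?thesis .
  qed
  have "q \<noteq> 0" using d3 by (simp add: q_def)
  then have qn0: "q ^ (n - 1) \<noteq> 0" by simp
  have "q ^ e dvd (q + 1) * (z n * int k)"
    using iffD1[OF dvd_times_left_cancel_iff[OF qn0] dv0] .
  then have dv: "q ^ e dvd ((q + 1) * z n) * int k"
    by (simp only: mult.assoc)
  have "(q + 1) * z n = 1 + q * (1 - (q + 1) * q ^ (e - 1))"
  proof -
    have qe: "q ^ e = q * q ^ (e - 1)" using e1 by (cases e) simp_all
    have "z n = 1 - q ^ e" unfolding z_def e_def by simp
    then have zn: "z n = 1 - q * q ^ (e - 1)" unfolding qe .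
    have "(q + 1) * (1 - q * Q) = 1 + q * (1 - (q + 1) * Q)" for Q :: int
      by (simp add: algebra_simps)
    then show ?thesis unfolding zn .
  qed
  then have "coprime q ((q + 1) * z n)" using coprime_1_plus by simp
  then have "coprime (q ^ e) ((q + 1) * z n)" by simp
  then have "q ^ e dvd int k" using dv coprime_dvd_mult_right_iff by blast
  then have "int ((d - 1) ^ e) dvd int k" using qd1 by simp
  then show ?thesis unfolding e_def int_dvd_int_iff .
qed


definition gsum :: "int \<Rightarrow> nat \<Rightarrow> int" where
  "gsum q j = (\<Sum>i<j. q ^ i)"

lemma gsum_Suc1: "gsum q (Suc j) = gsum q j + q ^ j"
  by (simp add: gsum_def)

lemma gsum_Suc2: "gsum q (Suc j) = 1 + q * gsum q j"
proof (induction j)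
  case 0
  then show ?case by (simp add: gsum_def)
next
  case (Suc j)
  have "gsum q (Suc (Suc j)) = gsum q (Suc j) + q ^ Suc j" by (rule gsum_Suc1)
  also have "\<dots> = 1 + q * gsum q j + q * q ^ j" using Suc.IH by simp
  also have "\<dots> = 1 + q * (gsum q j + q ^ j)" by (simp add: algebra_simps)
  also have "\<dots> = 1 + q * gsum q (Suc j)" by (simp add: gsum_Suc1)
  finally show ?case .
qed

lemma upper_bound:
  assumes d3: "d \<ge> 3" and n1: "1 \<le> n" and nh: "n \<le> h"
  shows "in_tree_lattice d h (\<lambda>w. int ((d - 1) ^ (h + 1 - n)) * level_vector d h n w)"
proof -
  let ?V = "tree_vertices d h"
  define q :: int where "q = int d - 1"
  have dq: "int d = q + 1" by (simp add: q_def)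
  have qd1: "int (d - 1) = q" using d3 by (simp add: q_def)
  define e where "e = h + 1 - n"
  have e1: "e \<ge> 1" using nh by (simp add: e_def)
  define f :: "nat \<Rightarrow> int" where "f m = gsum q (h + 1 - max m n)" for m
  have M: "int ((d - 1) ^ (h + 1 - n)) = q ^ e" using qd1 by (simp add: e_def)
  have key: "q ^ e * level_vector d h n w =
      (\<Sum>u\<in>?V. f (length u) * tree_Delta d h u w)" if wV: "w \<in> ?V" for w
  proof -
    define m where "m = length w"
    have mh: "m \<le> h" using wV by (simp add: tree_vertices_def m_def)
    have y: "level_vector d h n w = (if m = n then 1 else 0)"
      using wV by (simp add: level_vector_def m_def)
    have R: "(\<Sum>u\<in>?V. f (length u) * tree_Delta d h u w) =
      (q + 1) * f m - (if w = [] then 0 else f (m - 1))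
     - (if m < h then int (nch d w) * f (m + 1) else 0)"
      using rad_sum[OF wV, of f] dq by (simp add: m_def)
    have nch: "int (nch d w) = (if w = [] then q + 1 else q)"
      using dq qd1 by (simp add: nch_def)
    consider (lt) "m < n" | (eq) "m = n" | (gt) "m > n" by linarith
    then show ?thesis
    proof cases
      case lt
      have fm: "f m = gsum q e" "f (m - 1) = gsum q e" "f (m + 1) = gsum q e"
      proof -
        have "max m n = n" "max (m - 1) n = n" "max (m + 1) n = n" using lt by auto
        then show "f m = gsum q e" "f (m - 1) = gsum q e" "f (m + 1) = gsum q e"
          unfolding f_def e_def by simp_all
      qed
      have "m < h" using lt nh by simp
      have "(q + 1) * f m - (if w = [] then 0 else f (m - 1))
          - (if m < h then int (nch d w) * f (m + 1) else 0) = 0"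
        unfolding fm nch using \<open>m < h\<close> by (simp add: algebra_simps)
      then show ?thesis using R y lt by simp
    next
      case eq
      have wne: "w \<noteq> []" using eq n1 m_def by auto
      have fm: "f m = gsum q e" "f (m - 1) = gsum q e"
        using eq unfolding f_def e_def by (simp_all add: max_def)
      show ?thesis
      proof (cases "m < h")
        case True
        have fm1: "f (m + 1) = gsum q (e - 1)"
          using eq True unfolding f_def e_def by (simp add: max_def)
        have es: "gsum q e = gsum q (e - 1) + q ^ (e - 1)"
          using e1 gsum_Suc1[of q "e - 1"] by simp
        have qe: "q ^ e = q * q ^ (e - 1)" using e1 by (cases e) simp_all
        have "(q + 1) * f m - (if w = [] then 0 else f (m - 1))
          - (if m < h then int (nch d w) * f (m + 1) else 0) = q ^ e"
          unfolding fm fm1 nch es qe using True wne by (simp add: algebra_simps)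
        then show ?thesis using R y eq by simp
      next
        case False
        then have "e = 1" using eq mh by (simp add: e_def)
        then have g: "gsum q e = 1" by (simp add: gsum_def)
        have "(q + 1) * f m - (if w = [] then 0 else f (m - 1))
          - (if m < h then int (nch d w) * f (m + 1) else 0) = q ^ e"
          unfolding fm g using False wne \<open>e = 1\<close> by simp
        then show ?thesis using R y eq by simp
      qed
    next
      case gt
      have wne: "w \<noteq> []" using gt m_def by auto
      define j where "j = h + 1 - m"
      have j1: "j \<ge> 1" using mh by (simp add: j_def)
      have fm: "f m = gsum q j" "f (m - 1) = gsum q (Suc j)"
      proof -
        have "max m n = m" "max (m - 1) n = m - 1" using gt by auto
        moreover have "h + 1 - (m - 1) = Suc j" using gt mh unfolding j_def by linarith
        ultimately show "f m = gsum q j" "f (m - 1) = gsum q (Suc j)"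
          unfolding f_def j_def by simp_all
      qed
      show ?thesis
      proof (cases "m < h")
        case True
        have fm1: "f (m + 1) = gsum q (j - 1)"
          using gt True unfolding f_def j_def by (simp add: max_def)
        have js: "gsum q j = 1 + q * gsum q (j - 1)"
          using j1 gsum_Suc2[of q "j - 1"] by simp
        have "(q + 1) * f m - (if w = [] then 0 else f (m - 1))
          - (if m < h then int (nch d w) * f (m + 1) else 0) = 0"
          unfolding fm fm1 nch gsum_Suc2 using True wne js by (simp add: algebra_simps)
        then show ?thesis using R y gt by simp
      next
        case False
        then have "j = 1" using mh by (simp add: j_def)
        then have g: "gsum q j = 1" "gsum q (Suc j) = 1 + q"
          by (simp_all add: gsum_def)
        have "(q + 1) * f m - (if w = [] then 0 else f (m - 1))
          - (if m < h then int (nch d w) * f (m + 1) else 0) = 0"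
          unfolding fm g using False wne by simp
        then show ?thesis using R y gt by simp
      qed
    qed
  qed
  show ?thesis unfolding in_tree_lattice_def M
    by (rule exI[of _ "\<lambda>u. f (length u)"]) (use key in blast)
qed

theorem proposition7p7:
  fixes d h n :: nat
  assumes "d \<ge> 3" and "h \<ge> 1" and "1 \<le> n" and "n \<le> h"
  shows "tree_group_order d h (level_vector d h n) = (d - 1) ^ (h + 1 - n)"
proof -
  let ?M = "(d - 1) ^ (h + 1 - n)"
  let ?P = "\<lambda>k. k > 0 \<and> in_tree_lattice d h (\<lambda>w. int k * level_vector d h n w)"
  have pos: "?M > 0" using assms by simp
  have PM: "?P ?M" using pos upper_bound[OF assms(1,3,4)] by simp
  have least: "(LEAST k. ?P k) = ?M"
  proof (rule Least_equality)
    show "?P ?M" by (rule PM)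
  next
    fix k assume "?P k"
    then have "?M dvd k" using lower_bound[OF assms(1,3,4)] by blast
    then show "?M \<le> k" using \<open>?P k\<close> by (simp add: dvd_imp_le)
  qed
  have ex: "\<exists>k>0. in_tree_lattice d h (\<lambda>w. int k * level_vector d h n w)"
    using PM by blast
  have "tree_group_order d h (level_vector d h n) = (LEAST k. ?P k)"
    unfolding tree_group_order_def using ex by (rule if_P)
  then show ?thesis using least by simp
qed

end
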